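(* Let $P,Q,R_0,R_1$ be integers with $P>0$, $Q<0$, $R_0,R_1$ positive, and $\gcd(P,Q)=\gcd(R_1,Q)=1$. Let $R_{n+2}=PR_{n+1}-QR_n$ ($n\ge0$) and let $\alpha,\beta$ be the roots of $x^2-Px+Q$ with $|\alpha|\ge|\beta|$. Then \[R_m\ge(R_1+R_0|\beta|)\,\alpha^{m-2}\quad\text{for all } m\ge2.\] *)

theory Defs
  imports Complex_Main
begin

end

theory Submission
  imports Defs
begin

theorem lemma11:
  fixes P Q :: int and R :: "nat \<Rightarrow> int" and \<alpha> \<beta> :: real
  assumes "P > 0" and "Q < 0" and "R 0 > 0" and "R 1 > 0"
    and "gcd P Q = 1" and "gcd (R 1) Q = 1"
    and rec: "\<And>n. R (n + 2) = P * R (n + 1) - Q * R n"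
    and roots: "\<And>x::real. x ^ 2 - of_int P * x + of_int Q = (x - \<alpha>) * (x - \<beta>)"
    and "\<bar>\<alpha>\<bar> \<ge> \<bar>\<beta>\<bar>"
  shows "\<forall>m\<ge>2. real_of_int (R m) \<ge> (of_int (R 1) + of_int (R 0) * \<bar>\<beta>\<bar>) * \<alpha> ^ (m - 2)"
proof -
  have hQ: "of_int Q = \<alpha> * \<beta>" using roots[of 0] by simp
  have h1: "1 - of_int P + of_int Q = (1 - \<alpha>) * (1 - \<beta>)" using roots[of 1] by simp
  have hP: "of_int P = \<alpha> + \<beta>" using h1 hQ by (simp add: algebra_simps)
  have Pr: "real_of_int P \<ge> 1" using assms(1) by simp
  have Qr: "real_of_int Q \<le> -1" using assms(2) by simp
  have ab: "\<alpha> * \<beta> < 0" using hQ Qr by simp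
  have apos: "\<alpha> > 0"
  proof (rule ccontr)
    assume "\<not> \<alpha> > 0"
    moreover have "\<alpha> \<noteq> 0" using ab by auto
    ultimately have an: "\<alpha> < 0" by linarith
    have bp: "\<beta> > 0" using mult_nonpos_nonpos[of \<alpha> \<beta>] ab an by linarith
    have "\<bar>\<alpha>\<bar> = - \<alpha>" using an by simp
    moreover have "\<bar>\<beta>\<bar> = \<beta>" using bp by simp
    ultimately show False using assms(9) hP Pr by linarith
  qed
  have bneg: "\<beta> < 0" using mult_nonneg_nonneg[of \<alpha> \<beta>] ab apos by linarith
  have asq: "\<alpha> * \<alpha> = of_int P * \<alpha> - of_int Q" unfolding hP hQ by (simp add: algebra_simps)
  have "of_int P * \<alpha> \<ge> 1 * \<alpha>" using mult_right_mono[OF Pr, of \<alpha>] apos by linarith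
  hence "\<alpha> * \<alpha> \<ge> \<alpha> + 1" using asq Qr by linarith
  hence a1: "\<alpha> \<ge> 1"
  proof -
    assume h: "\<alpha> * \<alpha> \<ge> \<alpha> + 1"
    show ?thesis
    proof (rule ccontr)
      assume "\<not> \<alpha> \<ge> 1"
      hence "\<alpha> * \<alpha> < 1 * \<alpha>" using apos by (intro mult_strict_right_mono) auto
      thus False using h by linarith
    qed
  qed
  have pos: "R n > 0 \<and> R (n + 1) > 0" for n
  proof (induction n)
    case 0 then show ?case using assms(3,4) by simp
  next
    case (Suc n)
    have "R (n + 2) > 0" unfolding rec using Suc assms(1,2)
      by (smt (verit) mult_pos_pos mult_neg_pos)
    then show ?case using Suc by (simp add: numeral_2_eq_2)
  qed
  have recr: "real_of_int (R (n + 2)) = (\<alpha> + \<beta>) * R (n + 1) - \<alpha> * \<beta> * R n" for n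
    using arg_cong[OF rec[of n], of real_of_int] hP hQ by simp
  have S: "real_of_int (R (n + 1)) - \<beta> * R n = \<alpha> ^ n * (R 1 - \<beta> * R 0)" for n
  proof (induction n)
    case 0 then show ?case by simp
  next
    case (Suc n)
    have "real_of_int (R (Suc n + 1)) - \<beta> * R (Suc n) = \<alpha> * (R (n + 1) - \<beta> * R n)"
      using recr[of n] by (simp add: algebra_simps numeral_2_eq_2)
    then show ?case using Suc by simp
  qed
  show ?thesis
  proof (intro allI impI)
    fix m :: nat assume "m \<ge> 2"
    then obtain k where m: "m = k + 2" by (metis add.commute le_add_diff_inverse)
    have "real_of_int (R m) - (R (k + 1) - \<beta> * R k) = (of_int P - 1) * R (k + 1) + (- \<beta>) * (\<alpha> - 1) * R k"
      using arg_cong[OF rec[of k], of real_of_int] hQ m by (simp add: algebra_simps)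
    also have "\<dots> \<ge> 0" using pos[of k] Pr a1 bneg by (intro add_nonneg_nonneg mult_nonneg_nonneg) auto
    finally have "real_of_int (R m) \<ge> \<alpha> ^ k * (R 1 - \<beta> * R 0)" using S[of k] by simp
    thus "real_of_int (R m) \<ge> (of_int (R 1) + of_int (R 0) * \<bar>\<beta>\<bar>) * \<alpha> ^ (m - 2)"
      using m bneg by (simp add: algebra_simps)
  qed
qed

end
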